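(* Let $t$ be a partial function from $X^M$ to $X$ which is thrifty and belongs to $\mathscr C_J$. Then for every $n\in\omega$ the set $t^{-1}[\omega\times\{n\}]$ is bounded.
   Context: $X=\omega\times\omega$, elements $(a|b)$ ($x$-coordinate $a$, $y$-coordinate $b$); $M=\{1,\dots,m\}$. $J$ is the ideal of subsets of $X$ meeting each line $\omega\times\{n\}$ in a finite set; $\mathscr C_J$ is the set of finitary operations $f:X^k\to X$ with $f[A^k]\in J$ for all $A\in J$; a partial function from $X^M$ to $X$ is in $\mathscr C_J$ iff it has a total extension in $\mathscr C_J$. $B^M_k=\{u\in X^M:\exists i\in M\,((u_i)^y<k)\}$; a subset of $X^M$ is bounded iff contained in some $B^M_k$; $t$ is thrifty iff $t^{-1}[d]$ is bounded for all $d\in X$. *)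

theory Defs
  imports Main
begin

type_synonym pt = "nat \<times> nat"   (* (a|b): fst = x-coordinate a, snd = y-coordinate b *)

(* X^M with M = {1..m} is represented by lists of length m; coordinate i in M is u ! (i-1) *)
definition XM :: "nat \<Rightarrow> pt list set" where
  "XM m = {u. length u = m}"

definition J :: "pt set set" where
  "J = {A. \<forall>n. finite {a. (a, n) \<in> A}}"

definition CJ_total :: "nat \<Rightarrow> (pt list \<Rightarrow> pt) \<Rightarrow> bool" where
  "CJ_total m f \<longleftrightarrow> (\<forall>A\<in>J. f ` {u \<in> XM m. set u \<subseteq> A} \<in> J)"

definition partial_op :: "nat \<Rightarrow> (pt list \<Rightarrow> pt option) \<Rightarrow> bool" where
  "partial_op m t \<longleftrightarrow> dom t \<subseteq> XM m"

definition CJ_partial :: "nat \<Rightarrow> (pt list \<Rightarrow> pt option) \<Rightarrow> bool" where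
  "CJ_partial m t \<longleftrightarrow> (\<exists>f. CJ_total m f \<and> (\<forall>u\<in>dom t. t u = Some (f u)))"

definition B :: "nat \<Rightarrow> nat \<Rightarrow> pt list set" where
  "B m k = {u \<in> XM m. \<exists>i<m. snd (u ! i) < k}"

definition bounded_set :: "nat \<Rightarrow> pt list set \<Rightarrow> bool" where
  "bounded_set m S \<longleftrightarrow> (\<exists>k. S \<subseteq> B m k)"

definition preim :: "(pt list \<Rightarrow> pt option) \<Rightarrow> pt set \<Rightarrow> pt list set" where
  "preim t D = {u. \<exists>d\<in>D. t u = Some d}"

definition thrifty :: "nat \<Rightarrow> (pt list \<Rightarrow> pt option) \<Rightarrow> bool" where
  "thrifty m t \<longleftrightarrow> (\<forall>d. bounded_set m (preim t {d}))"

end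

theory Submission
  imports Defs
begin

theorem mainTheorem10:
  fixes m :: nat and t :: "pt list \<Rightarrow> pt option"
  assumes "partial_op m t" and "thrifty m t" and "CJ_partial m t"
  shows "\<forall>n. bounded_set m (preim t (UNIV \<times> {n}))"
proof (rule allI, rule ccontr)
  fix n
  assume nb: "\<not> bounded_set m (preim t (UNIV \<times> {n}))"
  obtain f where fC: "CJ_total m f" and ft: "\<And>u. u \<in> dom t \<Longrightarrow> t u = Some (f u)"
    using assms(3) unfolding CJ_partial_def by blast
  have "\<forall>k. \<exists>u. u \<in> preim t (UNIV \<times> {n}) \<and> u \<notin> B m k"
    using nb unfolding bounded_set_def by blast
  then obtain g where g: "\<And>k. g k \<in> preim t (UNIV \<times> {n}) \<and> g k \<notin> B m k" by metis
  have "\<forall>d. \<exists>k. preim t {d} \<subseteq> B m k" using assms(2) unfolding thrifty_def bounded_set_def by blast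
  then obtain kd where kd: "\<And>d. preim t {d} \<subseteq> B m (kd d)" by metis
  have gdom: "g k \<in> dom t" for k using g[of k] unfolding preim_def by auto
  have glen: "length (g k) = m" for k using gdom[of k] assms(1) unfolding partial_op_def XM_def by auto
  have gge: "\<And>p. p \<in> set (g k) \<Longrightarrow> k \<le> snd p" for k
  proof -
    fix p assume "p \<in> set (g k)"
    then obtain i where i: "i < m" "g k ! i = p" using glen[of k] by (auto simp: in_set_conv_nth)
    show "k \<le> snd p" using g[of k] glen[of k] i unfolding B_def XM_def by (auto simp: not_less) (metis not_le)
  qed
  define val where "val = (\<lambda>k. the (t (g k)))"
  have tval: "t (g k) = Some (val k)" for k using gdom[of k] unfolding val_def by auto
  have valn: "snd (val k) = n" for k using g[of k] tval[of k] unfolding preim_def by auto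
  define L where "L = rec_nat 0 (\<lambda>j l. Suc (max l (max (kd (val l)) (Suc (Max (insert 0 (snd ` set (g l))))))))"
  have L0: "L 0 = 0" unfolding L_def by simp
  have LS: "L (Suc j) = Suc (max (L j) (max (kd (val (L j))) (Suc (Max (insert 0 (snd ` set (g (L j))))))))" for j
    unfolding L_def by simp
  have Lsm: "strict_mono L" unfolding strict_mono_Suc_iff by (simp add: LS less_Suc_eq_le)
  have Lge: "j \<le> L j" for j using Lsm by (simp add: strict_mono_imp_increasing)
  have Lmono: "i \<le> j \<Longrightarrow> L i \<le> L j" for i j using Lsm by (simp add: strict_mono_less_eq)
  have Bmono: "k \<le> k' \<Longrightarrow> B m k \<subseteq> B m k'" for k k' unfolding B_def by fastforce
  have coordlt: "p \<in> set (g (L j)) \<Longrightarrow> snd p < L (Suc j)" for p j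
  proof -
    assume "p \<in> set (g (L j))"
    then have "snd p \<le> Max (insert 0 (snd ` set (g (L j))))" by (intro Max_ge) auto
    then show ?thesis by (simp add: LS)
  qed
  have inj: "inj (\<lambda>j. val (L j))"
  proof (rule injI)
    have key: "val (L i) \<noteq> val (L j)" if "i < j" for i j
    proof
      assume eq: "val (L i) = val (L j)"
      have "g (L j) \<in> preim t {val (L i)}" using tval[of "L j"] eq unfolding preim_def by auto
      hence "g (L j) \<in> B m (kd (val (L i)))" using kd by blast
      moreover have "kd (val (L i)) \<le> L j"
        using LS[of i] Lmono[of "Suc i" j] that by simp
      ultimately have "g (L j) \<in> B m (L j)" using Bmono by blast
      thus False using g by blast
    qed
    fix i j assume "val (L i) = val (L j)"
    thus "i = j" using key[of i j] key[of j i] by (metis linorder_neqE_nat)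
  qed
  define A where "A = (\<Union>j. set (g (L j)))"
  have AJ: "A \<in> J" unfolding J_def mem_Collect_eq
  proof (rule allI)
    fix c
    have "{a. (a, c) \<in> A} \<subseteq> (\<Union>j\<le>c. fst ` set (g (L j)))"
    proof
      fix a assume "a \<in> {a. (a, c) \<in> A}"
      then obtain j where j: "(a, c) \<in> set (g (L j))" unfolding A_def by auto
      have "L j \<le> c" using gge[OF j] by simp
      hence "j \<le> c" using Lge[of j] by simp
      thus "a \<in> (\<Union>j\<le>c. fst ` set (g (L j)))" using j by force
    qed
    thus "finite {a. (a, c) \<in> A}" by (rule finite_subset) auto
  qed
  have img: "f ` {u \<in> XM m. set u \<subseteq> A} \<in> J" using fC AJ unfolding CJ_total_def by blast
  have "range (\<lambda>j. fst (val (L j))) \<subseteq> {a. (a, n) \<in> f ` {u \<in> XM m. set u \<subseteq> A}}"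
  proof clarify
    fix j
    have "f (g (L j)) = val (L j)" using ft[OF gdom] tval by (metis option.inject)
    moreover have "g (L j) \<in> {u \<in> XM m. set u \<subseteq> A}" using glen unfolding XM_def A_def by auto
    ultimately have "val (L j) \<in> f ` {u \<in> XM m. set u \<subseteq> A}" by force
    moreover have "val (L j) = (fst (val (L j)), n)" using valn by (metis prod.collapse)
    ultimately show "(fst (val (L j)), n) \<in> f ` {u \<in> XM m. set u \<subseteq> A}" by simp
  qed
  moreover have "inj (\<lambda>j. fst (val (L j)))"
  proof (rule injI)
    fix i j assume "fst (val (L i)) = fst (val (L j))"
    hence "val (L i) = val (L j)" using valn by (simp add: prod_eq_iff)
    thus "i = j" using inj by (simp add: inj_def)
  qed
  hence "infinite (range (\<lambda>j. fst (val (L j))))" using finite_imageD by blast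
  ultimately have "infinite {a. (a, n) \<in> f ` {u \<in> XM m. set u \<subseteq> A}}" using finite_subset by blast
  thus False using img unfolding J_def by blast
qed

end
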